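(* Let $k\ge 2$, let $H$ be a triangle-free $k$-regular graph, and let $G=\overline{L(H)}$ be the complement of the line graph of $H$. Then the following are equivalent: $G$ is localizable; $G$ is $k$-localizable; $\chi'(H)=k$.
   Context: A clique is strong if it intersects every maximal independent set. A graph is localizable if its vertex set admits a partition into strong cliques, and $k$-localizable if it admits a partition into exactly $k$ strong cliques. $L(H)$ is the line graph of $H$ (vertex set $E(H)$, edges adjacent iff sharing an endpoint). $\chi'(H)$ is the chromatic index of $H$ (minimum number of matchings whose union is $E(H)$). *)

theory Defs
  imports Main
begin

definition is_clique :: "'b set \<Rightarrow> ('b \<Rightarrow> 'b \<Rightarrow> bool) \<Rightarrow> 'b set \<Rightarrow> bool" where
  "is_clique W adj C \<longleftrightarrow> C \<subseteq> W \<and> (\<forall>x\<in>C. \<forall>y\<in>C. x \<noteq> y \<longrightarrow> adj x y)"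

definition is_independent :: "'b set \<Rightarrow> ('b \<Rightarrow> 'b \<Rightarrow> bool) \<Rightarrow> 'b set \<Rightarrow> bool" where
  "is_independent W adj I \<longleftrightarrow> I \<subseteq> W \<and> (\<forall>x\<in>I. \<forall>y\<in>I. x \<noteq> y \<longrightarrow> \<not> adj x y)"

definition is_maximal_independent :: "'b set \<Rightarrow> ('b \<Rightarrow> 'b \<Rightarrow> bool) \<Rightarrow> 'b set \<Rightarrow> bool" where
  "is_maximal_independent W adj I \<longleftrightarrow>
     is_independent W adj I \<and> (\<forall>J. is_independent W adj J \<and> I \<subseteq> J \<longrightarrow> J = I)"

definition is_strong_clique :: "'b set \<Rightarrow> ('b \<Rightarrow> 'b \<Rightarrow> bool) \<Rightarrow> 'b set \<Rightarrow> bool" where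
  "is_strong_clique W adj C \<longleftrightarrow>
     is_clique W adj C \<and> (\<forall>I. is_maximal_independent W adj I \<longrightarrow> C \<inter> I \<noteq> {})"

definition is_partition :: "'b set \<Rightarrow> 'b set set \<Rightarrow> bool" where
  "is_partition W P \<longleftrightarrow> \<Union>P = W \<and> (\<forall>A\<in>P. A \<noteq> {}) \<and>
     (\<forall>A\<in>P. \<forall>B\<in>P. A \<noteq> B \<longrightarrow> A \<inter> B = {})"

definition localizable :: "'b set \<Rightarrow> ('b \<Rightarrow> 'b \<Rightarrow> bool) \<Rightarrow> bool" where
  "localizable W adj \<longleftrightarrow>
     (\<exists>P. is_partition W P \<and> (\<forall>C\<in>P. is_strong_clique W adj C))"

definition k_localizable :: "nat \<Rightarrow> 'b set \<Rightarrow> ('b \<Rightarrow> 'b \<Rightarrow> bool) \<Rightarrow> bool" where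
  "k_localizable k W adj \<longleftrightarrow>
     (\<exists>P. is_partition W P \<and> finite P \<and> card P = k \<and> (\<forall>C\<in>P. is_strong_clique W adj C))"

definition simple_graph :: "'a set \<Rightarrow> 'a set set \<Rightarrow> bool" where
  "simple_graph V E \<longleftrightarrow> finite V \<and> (\<forall>e\<in>E. e \<subseteq> V \<and> card e = 2)"

definition regular :: "nat \<Rightarrow> 'a set \<Rightarrow> 'a set set \<Rightarrow> bool" where
  "regular k V E \<longleftrightarrow> (\<forall>v\<in>V. card {e\<in>E. v \<in> e} = k)"

definition triangle_free :: "'a set \<Rightarrow> 'a set set \<Rightarrow> bool" where
  "triangle_free V E \<longleftrightarrow>
     \<not> (\<exists>x\<in>V. \<exists>y\<in>V. \<exists>z\<in>V. {x,y} \<in> E \<and> {y,z} \<in> E \<and> {x,z} \<in> E)"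

definition line_adj :: "'a set set \<Rightarrow> 'a set \<Rightarrow> 'a set \<Rightarrow> bool" where
  "line_adj E e f \<longleftrightarrow> e \<in> E \<and> f \<in> E \<and> e \<noteq> f \<and> e \<inter> f \<noteq> {}"

definition co_line_adj :: "'a set set \<Rightarrow> 'a set \<Rightarrow> 'a set \<Rightarrow> bool" where
  "co_line_adj E e f \<longleftrightarrow> e \<in> E \<and> f \<in> E \<and> e \<noteq> f \<and> \<not> line_adj E e f"

definition is_matching :: "'a set set \<Rightarrow> 'a set set \<Rightarrow> bool" where
  "is_matching E M \<longleftrightarrow> M \<subseteq> E \<and> (\<forall>e\<in>M. \<forall>f\<in>M. e \<noteq> f \<longrightarrow> e \<inter> f = {})"

definition chromatic_index :: "'a set set \<Rightarrow> nat" where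
  "chromatic_index E = (LEAST n. \<exists>\<M>. finite \<M> \<and> card \<M> = n \<and>
      (\<forall>M\<in>\<M>. is_matching E M) \<and> \<Union>\<M> = E)"

end

theory Submission
  imports Defs
begin

lemma lower_bound:
  assumes "finite N" "\<forall>M\<in>N. is_matching E M" "{e\<in>E. v\<in>e} \<subseteq> \<Union>N"
  shows "card {e\<in>E. v\<in>e} \<le> card N"
proof -
  let ?S = "{e\<in>E. v\<in>e}"
  have "\<forall>e\<in>?S. \<exists>M\<in>N. e\<in>M" using assms(3) by blast
  then obtain h where h: "\<forall>e\<in>?S. h e \<in> N \<and> e \<in> h e" by metis
  have "inj_on h ?S"
  proof (rule inj_onI)
    fix x y assume xy: "x\<in>?S" "y\<in>?S" "h x = h y"
    show "x = y"
    proof (rule ccontr)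
      assume "x \<noteq> y"
      moreover have "x \<in> h x" "y \<in> h x" "h x \<in> N" using h xy by auto
      ultimately have "x \<inter> y = {}" using assms(2) unfolding is_matching_def by blast
      thus False using xy by blast
    qed
  qed
  moreover have "h ` ?S \<subseteq> N" using h by blast
  ultimately show ?thesis using card_inj_on_le assms(1) by blast
qed

lemma clique_matching: "is_clique E (co_line_adj E) C \<Longrightarrow> is_matching E C"
  unfolding is_clique_def is_matching_def co_line_adj_def line_adj_def by blast

lemma matching_clique: "is_matching E C \<Longrightarrow> is_clique E (co_line_adj E) C"
  unfolding is_clique_def is_matching_def co_line_adj_def line_adj_def by blast

lemma indep_meet:
  assumes "is_independent E (co_line_adj E) I" "x \<in> I" "y \<in> I" "x \<noteq> y"
  shows "x \<inter> y \<noteq> {}"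
  using assms unfolding is_independent_def co_line_adj_def line_adj_def by blast

lemma card2_eq: "card f = 2 \<Longrightarrow> b\<in>f \<Longrightarrow> c\<in>f \<Longrightarrow> b\<noteq>c \<Longrightarrow> f = {b,c}"
  by (auto simp: card_2_iff)

lemma star_indep:
  assumes "S \<subseteq> E" "\<forall>f\<in>S. v \<in> f"
  shows "is_independent E (co_line_adj E) S"
  using assms unfolding is_independent_def co_line_adj_def line_adj_def by blast

lemma indep_star:
  assumes sg: "simple_graph V E" and tf: "triangle_free V E"
    and ind: "is_independent E (co_line_adj E) I" and ne: "I \<noteq> {}"
  shows "\<exists>v\<in>V. \<forall>f\<in>I. v\<in>f"
proof -
  have IE: "I \<subseteq> E" using ind unfolding is_independent_def by blast
  have edge: "\<And>f. f \<in> E \<Longrightarrow> f \<subseteq> V \<and> card f = 2" using sg unfolding simple_graph_def by blast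
  obtain e where e: "e \<in> I" using ne by blast
  then obtain a b where ab: "e = {a,b}" "a \<noteq> b" using edge IE by (metis card_2_iff subsetD)
  have abV: "a \<in> V" "b \<in> V" using edge[of e] e IE ab by auto
  show ?thesis
  proof (cases "\<forall>f\<in>I. a\<in>f")
    case True then show ?thesis using abV by blast
  next
    case False
    then obtain f where f: "f \<in> I" "a \<notin> f" by blast
    have "f \<noteq> e" using f ab by blast
    hence "f \<inter> e \<noteq> {}" using indep_meet[OF ind f(1) e] by blast
    hence bf: "b \<in> f" using ab f by blast
    show ?thesis
    proof (cases "\<forall>g\<in>I. b\<in>g")
      case True then show ?thesis using abV by blast
    next
      case False
      then obtain g where g: "g \<in> I" "b \<notin> g" by blast
      have "g \<noteq> e" using g ab by blast
      hence "g \<inter> e \<noteq> {}" using indep_meet[OF ind g(1) e] by blast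
      hence ag: "a \<in> g" using ab g by blast
      have "f \<noteq> g" using ag f by blast
      hence "f \<inter> g \<noteq> {}" using indep_meet[OF ind f(1) g(1)] by blast
      then obtain c where c: "c \<in> f" "c \<in> g" by blast
      have cab: "c \<noteq> a" "c \<noteq> b" using c f g by auto
      have "f = {b,c}" using card2_eq[of f b c] edge[of f] f IE bf c cab by auto
      moreover have "g = {a,c}" using card2_eq[of g a c] edge[of g] g IE ag c cab by auto
      moreover have "c \<in> V" using edge[of f] f IE c by auto
      ultimately have "{a,b} \<in> E \<and> {b,c} \<in> E \<and> {a,c} \<in> E" using IE e f g ab by auto
      thus ?thesis using tf abV \<open>c \<in> V\<close> unfolding triangle_free_def by blast
    qed
  qed
qed

lemma other_end: "card e = 2 \<Longrightarrow> v \<in> e \<Longrightarrow> \<exists>a. e = {v,a} \<and> a \<noteq> v"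
  unfolding card_2_iff by blast
lemma two_elems:
  assumes "2 \<le> card S"
  obtains x y where "x\<in>S" "y\<in>S" "x\<noteq>y"
proof -
  have "S \<noteq> {}" using assms by (cases "S = {}") simp_all
  then obtain x where x: "x \<in> S" by blast
  have "\<not> S \<subseteq> {x}"
  proof
    assume "S \<subseteq> {x}"
    hence "card S \<le> card {x}" using card_mono[of "{x}" S] by simp
    thus False using assms by simp
  qed
  then obtain y where "y \<in> S" "y \<noteq> x" by blast
  thus ?thesis using that x by blast
qed

lemma star_maxind:
  assumes sg: "simple_graph V E" and tf: "triangle_free V E"
    and v: "v \<in> V" and c2: "card {e\<in>E. v\<in>e} \<ge> 2"
  shows "is_maximal_independent E (co_line_adj E) {e\<in>E. v\<in>e}"
proof -
  let ?S = "{e\<in>E. v\<in>e}"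
  have edge: "\<And>f. f \<in> E \<Longrightarrow> f \<subseteq> V \<and> card f = 2" using sg unfolding simple_graph_def by blast
  have indS: "is_independent E (co_line_adj E) ?S" by (rule star_indep) auto
  obtain e1 e2 where e1: "e1 \<in> ?S" and e2: "e2 \<in> ?S" "e2 \<noteq> e1"
    using two_elems[OF c2] by blast
  obtain a where a: "e1 = {v,a}" "a \<noteq> v"
    using edge[of e1] e1 other_end[of e1 v] by blast
  obtain b where b: "e2 = {v,b}" "b \<noteq> v"
    using edge[of e2] e2 other_end[of e2 v] by blast
  have "a \<noteq> b" using a b e2 by blast
  have aV: "a \<in> V" "b \<in> V" using edge[of e1] edge[of e2] e1 e2 a b by auto
  show ?thesis
    unfolding is_maximal_independent_def
  proof (intro conjI allI impI indS)
    fix J assume J: "is_independent E (co_line_adj E) J \<and> ?S \<subseteq> J"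
    have "J \<subseteq> ?S"
    proof
      fix f assume fJ: "f \<in> J"
      have fE: "f \<in> E" using J fJ unfolding is_independent_def by blast
      have "v \<in> f"
      proof (rule ccontr)
        assume nv: "v \<notin> f"
        have "f \<noteq> e1" "f \<noteq> e2" using nv a b by auto
        hence "f \<inter> e1 \<noteq> {}" "f \<inter> e2 \<noteq> {}"
          using indep_meet[of E J f] J fJ e1 e2 by blast+
        hence "a \<in> f" "b \<in> f" using a b nv by auto
        hence "f = {a,b}" using card2_eq[of f a b] edge[OF fE] \<open>a \<noteq> b\<close> by auto
        hence "{v,a} \<in> E \<and> {a,b} \<in> E \<and> {v,b} \<in> E" using fE e1 e2 a b by auto
        thus False using tf v aV unfolding triangle_free_def by blast
      qed
      thus "f \<in> ?S" using fE by blast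
    qed
    thus "J = ?S" using J by blast
  qed
qed

lemma maxind_star:
  assumes sg: "simple_graph V E" and tf: "triangle_free V E" and En: "E \<noteq> {}"
    and mi: "is_maximal_independent E (co_line_adj E) I"
  shows "\<exists>v\<in>V. {e\<in>E. v\<in>e} \<subseteq> I"
proof -
  have ind: "is_independent E (co_line_adj E) I" using mi unfolding is_maximal_independent_def by blast
  have IE: "I \<subseteq> E" using ind unfolding is_independent_def by blast
  have ne: "I \<noteq> {}"
  proof
    assume "I = {}"
    obtain e where "e \<in> E" using En by blast
    have "is_independent E (co_line_adj E) {e}"
      using \<open>e \<in> E\<close> unfolding is_independent_def by blast
    hence "{e} = I" using mi \<open>I = {}\<close> unfolding is_maximal_independent_def by blast
    thus False using \<open>I = {}\<close> by blast
  qed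
  obtain v where v: "v \<in> V" "\<forall>f\<in>I. v\<in>f" using indep_star[OF sg tf ind ne] by blast
  have "is_independent E (co_line_adj E) (I \<union> {e\<in>E. v\<in>e})"
    by (rule star_indep[where v=v]) (use IE v in auto)
  hence "I \<union> {e\<in>E. v\<in>e} = I" using mi unfolding is_maximal_independent_def by blast
  thus ?thesis using v by blast
qed

theorem mainTheorem7:
  fixes V :: "'a set" and E :: "'a set set" and k :: nat
  assumes "k \<ge> 2"
    and "simple_graph V E"
    and "V \<noteq> {}"
    and "regular k V E"
    and "triangle_free V E"
  shows "(localizable E (co_line_adj E) \<longleftrightarrow> k_localizable k E (co_line_adj E))
       \<and> (k_localizable k E (co_line_adj E) \<longleftrightarrow> chromatic_index E = k)"
proof -
  note k2 = assms(1) and sg = assms(2) and tf = assms(5)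
  have deg: "\<And>v. v \<in> V \<Longrightarrow> card {e\<in>E. v\<in>e} = k" using assms(4) unfolding regular_def by blast
  have edge: "\<And>f. f \<in> E \<Longrightarrow> f \<subseteq> V \<and> card f = 2" using sg unfolding simple_graph_def by blast
  have finE: "finite E"
  proof -
    have "E \<subseteq> Pow V" using edge by blast
    moreover have "finite V" using sg unfolding simple_graph_def by blast
    ultimately show ?thesis using finite_subset by blast
  qed
  obtain v0 where v0: "v0 \<in> V" using assms(3) by blast
  have En: "E \<noteq> {}" using deg[OF v0] k2 by (cases "E = {}") auto
  have maxS: "\<And>v. v \<in> V \<Longrightarrow> is_maximal_independent E (co_line_adj E) {e\<in>E. v\<in>e}"
    using star_maxind[OF sg tf] deg k2 by simp
  have LB: "\<And>N. finite N \<Longrightarrow> (\<forall>M\<in>N. is_matching E M) \<Longrightarrow> \<Union>N = E \<Longrightarrow> k \<le> card N"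
    using lower_bound[of _ E v0] deg[OF v0] by blast
  have A: "localizable E (co_line_adj E) \<Longrightarrow> k_localizable k E (co_line_adj E)"
  proof -
    assume "localizable E (co_line_adj E)"
    then obtain P where P: "is_partition E P" "\<forall>C\<in>P. is_strong_clique E (co_line_adj E) C"
      unfolding localizable_def by blast
    have finP: "finite P"
    proof -
      have "P \<subseteq> Pow E" using P(1) unfolding is_partition_def by blast
      thus ?thesis using finE finite_subset by blast
    qed
    have mat: "\<forall>M\<in>P. is_matching E M"
      using P(2) clique_matching unfolding is_strong_clique_def by blast
    have ge: "k \<le> card P" using LB[OF finP mat] P(1) unfolding is_partition_def by blast
    have "\<forall>C\<in>P. \<exists>e. e \<in> C \<inter> {e\<in>E. v0\<in>e}"
    proof
      fix C assume "C \<in> P"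
      hence "C \<inter> {e\<in>E. v0\<in>e} \<noteq> {}" using P(2) maxS[OF v0] unfolding is_strong_clique_def by simp
      thus "\<exists>e. e \<in> C \<inter> {e\<in>E. v0\<in>e}" by blast
    qed
    then obtain h where h: "\<forall>C\<in>P. h C \<in> C \<inter> {e\<in>E. v0\<in>e}" by metis
    have "inj_on h P"
    proof (rule inj_onI)
      fix x y assume "x \<in> P" "y \<in> P" "h x = h y"
      hence "h x \<in> x \<inter> y" using h by auto
      thus "x = y" using \<open>x \<in> P\<close> \<open>y \<in> P\<close> P(1) unfolding is_partition_def by blast
    qed
    moreover have "h ` P \<subseteq> {e\<in>E. v0\<in>e}" using h by blast
    moreover have "finite {e\<in>E. v0\<in>e}" using finE by simp
    ultimately have "card P \<le> card {e\<in>E. v0\<in>e}" by (rule card_inj_on_le)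
    hence "card P = k" using ge deg[OF v0] by simp
    thus ?thesis using finP P unfolding k_localizable_def by blast
  qed
  have B: "k_localizable k E (co_line_adj E) \<Longrightarrow> localizable E (co_line_adj E)"
    unfolding k_localizable_def localizable_def by blast
  let ?Q = "\<lambda>n. \<exists>\<M>. finite \<M> \<and> card \<M> = n \<and> (\<forall>M\<in>\<M>. is_matching E M) \<and> \<Union>\<M> = E"
  have C: "k_localizable k E (co_line_adj E) \<Longrightarrow> chromatic_index E = k"
  proof -
    assume "k_localizable k E (co_line_adj E)"
    then obtain P where P: "is_partition E P" "finite P" "card P = k" "\<forall>C\<in>P. is_strong_clique E (co_line_adj E) C"
      unfolding k_localizable_def by blast
    have mat: "\<forall>M\<in>P. is_matching E M"
      using P(4) clique_matching unfolding is_strong_clique_def by blast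
    have "?Q k" using P mat unfolding is_partition_def by blast
    moreover have "\<And>n. ?Q n \<Longrightarrow> k \<le> n" using LB by blast
    ultimately show ?thesis unfolding chromatic_index_def by (rule Least_equality)
  qed
  have D: "chromatic_index E = k \<Longrightarrow> k_localizable k E (co_line_adj E)"
  proof -
    assume ci: "chromatic_index E = k"
    have "?Q (card ((\<lambda>e. {e}) ` E))"
      using finE unfolding is_matching_def by (intro exI[of _ "(\<lambda>e. {e}) ` E"]) auto
    hence "?Q (Least ?Q)" by (rule LeastI)
    hence "?Q k" using ci unfolding chromatic_index_def by simp
    then obtain \<M> where M: "finite \<M>" "card \<M> = k" "\<forall>M\<in>\<M>. is_matching E M" "\<Union>\<M> = E" by blast
    have drop: "\<And>M v. M \<in> \<M> \<Longrightarrow> v \<in> V \<Longrightarrow> \<not> {e\<in>E. v\<in>e} \<subseteq> \<Union>(\<M> - {M})"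
    proof
      fix M v assume Mm: "M \<in> \<M>" and v: "v \<in> V" and sub: "{e\<in>E. v\<in>e} \<subseteq> \<Union>(\<M> - {M})"
      have "k \<le> card (\<M> - {M})" using lower_bound[of "\<M> - {M}" E v] M sub deg[OF v] by auto
      moreover have "card (\<M> - {M}) = k - 1" using M Mm by simp
      ultimately show False using k2 by simp
    qed
    have meet: "\<And>M v. M \<in> \<M> \<Longrightarrow> v \<in> V \<Longrightarrow> M \<inter> {e\<in>E. v\<in>e} \<noteq> {}"
    proof
      fix M v assume Mm: "M \<in> \<M>" and v: "v \<in> V" and em: "M \<inter> {e\<in>E. v\<in>e} = {}"
      have "{e\<in>E. v\<in>e} \<subseteq> \<Union>(\<M> - {M})" using M(4) em by blast
      thus False using drop[OF Mm v] by blast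
    qed
    have disj: "\<And>M1 M2. M1 \<in> \<M> \<Longrightarrow> M2 \<in> \<M> \<Longrightarrow> M1 \<noteq> M2 \<Longrightarrow> M1 \<inter> M2 = {}"
    proof (rule ccontr)
      fix M1 M2 assume M1: "M1 \<in> \<M>" and M2: "M2 \<in> \<M>" and ne: "M1 \<noteq> M2" and "M1 \<inter> M2 \<noteq> {}"
      then obtain e where e: "e \<in> M1" "e \<in> M2" by blast
      have eE: "e \<in> E" using e(1) M1 M(4) by blast
      then obtain v where v: "v \<in> e" using edge[OF eE] by (metis card_2_iff insertI1)
      have vV: "v \<in> V" using edge[OF eE] v by blast
      have "{e\<in>E. v\<in>e} \<subseteq> \<Union>(\<M> - {M2})"
      proof
        fix f assume f: "f \<in> {e\<in>E. v\<in>e}"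
        then obtain M where M': "M \<in> \<M>" "f \<in> M" using M(4) by blast
        show "f \<in> \<Union>(\<M> - {M2})"
        proof (cases "M = M2")
          case True
          have "f = e" using M(3) M2 M' True e f v unfolding is_matching_def by blast
          thus ?thesis using M1 ne e by blast
        next
          case False thus ?thesis using M' by blast
        qed
      qed
      thus False using drop[OF M2 vV] by blast
    qed
    have part: "is_partition E \<M>"
      unfolding is_partition_def using M(4) meet[OF _ v0] disj by blast
    have strong: "\<forall>C\<in>\<M>. is_strong_clique E (co_line_adj E) C"
    proof
      fix C assume C: "C \<in> \<M>"
      have "is_clique E (co_line_adj E) C" using matching_clique M(3) C by blast
      moreover have "\<forall>I. is_maximal_independent E (co_line_adj E) I \<longrightarrow> C \<inter> I \<noteq> {}"
      proof (intro allI impI)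
        fix I assume "is_maximal_independent E (co_line_adj E) I"
        then obtain v where "v \<in> V" "{e\<in>E. v\<in>e} \<subseteq> I" using maxind_star[OF sg tf En] by blast
        thus "C \<inter> I \<noteq> {}" using meet[OF C] by blast
      qed
      ultimately show "is_strong_clique E (co_line_adj E) C" unfolding is_strong_clique_def by blast
    qed
    show ?thesis unfolding k_localizable_def using part M strong by blast
  qed
  show ?thesis using A B C D by blast
qed

end
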